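(* There is a universal constant $C>0$ such that for all integers $m,n\ge1$ and all $p,q\in[0,2/3]$, \[ (1-Cm^{-1/3})P(m-1,n,p,q)-2m^{-2}\le P(m,n,p,q)\le(1+Cn^{-1/3})P(m,n-1,p,q)+2n^{-2}. \]
   Context: For integers $m,n\ge0$ and $p,q\in[0,1]$, $P(m,n,p,q)=\Pr(Y\ge X)$ where $X\sim\mathrm{Binom}(m,\max\{p,q\})$ and $Y\sim\mathrm{Binom}(n,\min\{p,q\})$ are independent. *)

theory Defs
  imports "HOL-Probability.Probability"
begin

definition Pgap :: "nat \<Rightarrow> nat \<Rightarrow> real \<Rightarrow> real \<Rightarrow> real" where
  "Pgap m n p q =
     measure_pmf.prob
       (pair_pmf (binomial_pmf m (max p q)) (binomial_pmf n (min p q)))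
       {xy. snd xy \<ge> fst xy}"

end

theory Submission
  imports Defs
begin


definition bb :: "nat \<Rightarrow> real \<Rightarrow> nat \<Rightarrow> real" where
  "bb N a k = real (N choose k) * a^k * (1-a)^(N-k)"

lemma choose_ratio: "(n choose Suc k) * Suc k = (n choose k) * (n - k)"
  by (metis binomial_absorption binomial_absorb_comp mult.commute)

lemma bb_pmf: "0 \<le> a \<Longrightarrow> a \<le> 1 \<Longrightarrow> pmf (binomial_pmf N a) k = bb N a k"
  by (simp add: bb_def)

lemma bb_nonneg: "0 \<le> a \<Longrightarrow> a \<le> 1 \<Longrightarrow> 0 \<le> bb N a k"
  by (simp add: bb_def)

lemma bb_le1: "0 \<le> a \<Longrightarrow> a \<le> 1 \<Longrightarrow> bb N a k \<le> 1"
  by (metis bb_pmf pmf_le_1)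

lemma bb_zero: "N < k \<Longrightarrow> bb N a k = 0"
  by (simp add: bb_def)

lemma bb_sum: "(\<Sum>k\<le>N. bb N a k) = 1"
proof -
  have "(\<Sum>k\<le>N. bb N a k) = (a + (1-a))^N"
    by (subst binomial_ring) (simp add: bb_def atLeast0AtMost)
  thus ?thesis by simp
qed

lemma bb_sum_le1:
  assumes "finite A" "0 \<le> a" "a \<le> 1"
  shows "(\<Sum>k\<in>A. bb N a k) \<le> 1"
proof -
  have "(\<Sum>k\<in>A. bb N a k) = (\<Sum>k\<in>A \<inter> {..N}. bb N a k)"
    using assms(1) by (intro sum.mono_neutral_right) (auto, metis bb_zero leI)
  also have "\<dots> \<le> (\<Sum>k\<le>N. bb N a k)"
    using assms by (intro sum_mono2) (auto simp: bb_nonneg)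
  finally show ?thesis using bb_sum by simp
qed

lemma bb_ratio: "bb N a (Suc j) * (real j + 1) * (1-a) = bb N a j * (real N - real j) * a"
proof (cases "j < N")
  case True
  have c: "real (N choose Suc j) * (real j + 1) = real (N choose j) * (real N - real j)"
  proof -
    have "real ((N choose Suc j) * Suc j) = real ((N choose j) * (N - j))"
      by (simp only: choose_ratio)
    thus ?thesis using True by (simp add: of_nat_diff algebra_simps)
  qed
  have e: "(1-a)^(N - j) = (1-a) * (1-a)^(N - Suc j)"
    using True by (metis Suc_diff_Suc power_Suc)
  have "bb N a (Suc j) * (real j + 1) * (1-a)
      = (real (N choose Suc j) * (real j + 1)) * (a * a^j) * ((1-a) * (1-a)^(N - Suc j))"
    unfolding bb_def by (simp only: power_Suc mult_ac)
  also have "\<dots> = (real (N choose j) * (real N - real j)) * (a * a^j) * (1-a)^(N - j)"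
    by (simp only: c e)
  also have "\<dots> = bb N a j * (real N - real j) * a"
    unfolding bb_def by (simp only: mult_ac)
  finally show ?thesis .
next
  case False
  thus ?thesis
    by (cases "j = N") (auto simp: bb_def binomial_eq_0)
qed

lemma bb_pascal0: "bb (Suc N) a 0 = (1-a) * bb N a 0"
  by (simp add: bb_def)

lemma bb_pascal: "bb (Suc N) a (Suc k) = a * bb N a k + (1-a) * bb N a (Suc k)"
proof (cases "Suc k \<le> N")
  case True
  have e: "(1-a)^(N - k) = (1-a) * (1-a)^(N - Suc k)"
    using True by (metis Suc_diff_Suc Suc_le_lessD power_Suc)
  have "bb (Suc N) a (Suc k) = real (N choose k) * a^(Suc k) * (1-a)^(N-k) + real (N choose Suc k) * a^(Suc k) * (1-a)^(N-k)"
    by (simp add: bb_def algebra_simps)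
  also have "\<dots> = a * bb N a k + (1-a) * bb N a (Suc k)"
    unfolding bb_def e by (simp add: algebra_simps)
  finally show ?thesis .
next
  case False
  thus ?thesis by (auto simp: bb_def binomial_eq_0)
qed


lemma bb_growth:
  assumes "0 \<le> c" "0 \<le> a" "a < 1"
    "\<And>j. k < j \<Longrightarrow> j \<le> k + i \<Longrightarrow> c * real j * (1-a) \<le> (real N - real j + 1) * a"
  shows "c^i * bb N a k \<le> bb N a (k+i)"
  using assms(4)
proof (induction i)
  case 0 thus ?case by simp
next
  case (Suc i)
  have ih: "c^i * bb N a k \<le> bb N a (k+i)" using Suc by simp
  have cond: "c * real (Suc (k+i)) * (1-a) \<le> (real N - real (Suc (k+i)) + 1) * a"
    using Suc.prems[of "Suc (k+i)"] by simp
  have r: "bb N a (Suc (k+i)) * (real (k+i) + 1) * (1-a) = bb N a (k+i) * (real N - real (k+i)) * a"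
    by (rule bb_ratio)
  have nn: "0 \<le> bb N a (k+i)" using assms by (simp add: bb_nonneg)
  have "(c * bb N a (k+i)) * ((real (k+i) + 1) * (1-a)) \<le> bb N a (Suc (k+i)) * ((real (k+i) + 1) * (1-a))"
  proof -
    have "(c * bb N a (k+i)) * ((real (k+i) + 1) * (1-a)) = bb N a (k+i) * (c * real (Suc (k+i)) * (1-a))"
      by (simp add: algebra_simps)
    also have "\<dots> \<le> bb N a (k+i) * ((real N - real (Suc (k+i)) + 1) * a)"
      using cond nn by (rule mult_left_mono)
    also have "\<dots> = bb N a (k+i) * (real N - real (k+i)) * a"
      by (simp add: algebra_simps)
    also have "\<dots> = bb N a (Suc (k+i)) * ((real (k+i) + 1) * (1-a))"
      using r by (simp only: mult.assoc)
    finally show ?thesis .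
  qed
  moreover have pos: "0 < (real (k+i) + 1) * (1-a)" using assms by simp
  ultimately have "c * bb N a (k+i) \<le> bb N a (Suc (k+i))"
    by (rule mult_right_le_imp_le)
  moreover have "c^(Suc i) * bb N a k = c * (c^i * bb N a k)"
    by (simp only: power_Suc mult.assoc)
  moreover have "c * (c^i * bb N a k) \<le> c * bb N a (k+i)"
    using ih assms(1) by (rule mult_left_mono)
  ultimately show ?case by simp
qed

lemma bb_decay:
  assumes "0 \<le> c" "0 \<le> a" "a < 1"
    "\<And>j. k < j \<Longrightarrow> j \<le> k + i \<Longrightarrow> c * (real N - real j + 1) * a \<le> real j * (1-a)"
  shows "c^i * bb N a (k+i) \<le> bb N a k"
  using assms(4)
proof (induction i)
  case 0 thus ?case by simp
next
  case (Suc i)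
  have ih: "c^i * bb N a (k+i) \<le> bb N a k" using Suc by simp
  have cond: "c * (real N - real (Suc (k+i)) + 1) * a \<le> real (Suc (k+i)) * (1-a)"
    using Suc.prems[of "Suc (k+i)"] by simp
  have r: "bb N a (Suc (k+i)) * (real (k+i) + 1) * (1-a) = bb N a (k+i) * (real N - real (k+i)) * a"
    by (rule bb_ratio)
  have nn: "0 \<le> bb N a (k+i)" using assms by (simp add: bb_nonneg)
  have "(c * bb N a (Suc (k+i))) * ((real (k+i) + 1) * (1-a)) \<le> bb N a (k+i) * ((real (k+i) + 1) * (1-a))"
  proof -
    have "(c * bb N a (Suc (k+i))) * ((real (k+i) + 1) * (1-a)) = c * (bb N a (Suc (k+i)) * (real (k+i) + 1) * (1-a))"
      by (simp only: mult_ac)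
    also have "\<dots> = c * (bb N a (k+i) * (real N - real (k+i)) * a)"
      using r by simp
    also have "\<dots> = bb N a (k+i) * (c * (real N - real (Suc (k+i)) + 1) * a)"
      by (simp add: algebra_simps)
    finally have "(c * bb N a (Suc (k+i))) * ((real (k+i) + 1) * (1-a)) = bb N a (k+i) * (c * (real N - real (Suc (k+i)) + 1) * a)" .
    also have "\<dots> \<le> bb N a (k+i) * (real (Suc (k+i)) * (1-a))"
      using cond nn by (rule mult_left_mono)
    also have "\<dots> = bb N a (k+i) * ((real (k+i) + 1) * (1-a))"
      by simp
    finally show ?thesis .
  qed
  moreover have pos: "0 < (real (k+i) + 1) * (1-a)" using assms by simp
  ultimately have "c * bb N a (Suc (k+i)) \<le> bb N a (k+i)"
    by (rule mult_right_le_imp_le)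
  moreover have "0 \<le> c^i" using assms(1) by simp
  ultimately have "c^i * (c * bb N a (Suc (k+i))) \<le> c^i * bb N a (k+i)"
    by (rule mult_left_mono)
  moreover have "c^(Suc i) * bb N a (k + Suc i) = c^i * (c * bb N a (Suc (k+i)))"
    by (simp only: power_Suc mult_ac add_Suc_right)
  ultimately show ?case using ih by linarith
qed

lemma tail_pow:
  fixes e v :: real
  assumes "0 < e" "24 \<le> s" "0 \<le> v" "v \<le> (real s * e / 24)^2"
  shows "v^6 \<le> (1+e)^s"
proof -
  define q where "q = s div 12"
  have q1: "12 * q \<le> s" unfolding q_def by simp
  have q2: "real s / 24 \<le> real q"
  proof -
    have "s < 12 * q + 12" unfolding q_def by linarith
    hence "real s < 12 * real q + 12" by linarith
    thus ?thesis using assms(2) by linarith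
  qed
  have w: "real s * e / 24 \<le> 1 + real q * e"
  proof -
    have "real s * e / 24 = (real s / 24) * e" by simp
    also have "\<dots> \<le> real q * e" using q2 assms(1) by (intro mult_right_mono) auto
    finally show ?thesis by simp
  qed
  have "v^6 \<le> ((real s * e / 24)^2)^6"
    using assms by (intro power_mono) auto
  also have "\<dots> = (real s * e / 24)^12" by (simp add: power_mult[symmetric])
  also have "\<dots> \<le> (1 + real q * e)^12"
    using w assms by (intro power_mono) auto
  also have "\<dots> \<le> ((1+e)^q)^12"
    using Bernoulli_inequality[of e q] assms by (intro power_mono) auto
  also have "\<dots> = (1+e)^(12*q)" by (simp add: power_mult[symmetric] mult.commute)
  also have "\<dots> \<le> (1+e)^s"
    using q1 assms by (intro power_increasing) auto
  finally show ?thesis .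
qed

lemma pow_ge_third:
  assumes "1 \<le> L"
  shows "1/3 \<le> (real L / (real L + 1))^L"
proof -
  have "(1 + 1/real L)^L \<le> exp (1/real L)^L"
    using assms by (intro power_mono) (auto simp: exp_ge_add_one_self)
  also have "\<dots> = exp (real L * (1/real L))" by (rule exp_of_nat_mult[symmetric])
  also have "\<dots> = exp 1" using assms by simp
  also have "\<dots> \<le> 3" by (rule exp_le)
  finally have h: "(1 + 1/real L)^L \<le> 3" .
  have "(real L / (real L + 1))^L = 1 / (1 + 1/real L)^L"
    using assms by (simp add: power_divide field_simps)
  also have "\<dots> \<ge> 1/3"
    using h by (intro divide_left_mono) (auto intro!: zero_less_power add_pos_nonneg)
  finally show ?thesis .
qed



lemma nat_ceil_bounds:
  assumes "0 \<le> x"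
  shows "x \<le> real (nat \<lceil>x\<rceil>)" "real (nat \<lceil>x\<rceil>) \<le> x + 1"
  using assms by (auto simp: of_nat_nat)

lemma nat_floor_bounds:
  assumes "0 \<le> x"
  shows "x - 1 \<le> real (nat \<lfloor>x\<rfloor>)" "real (nat \<lfloor>x\<rfloor>) \<le> x"
  using assms by (auto simp: of_nat_nat less_imp_le)

lemma Lstar:
  fixes N k :: nat and a v K :: real
  assumes a: "0 \<le> a" "a \<le> 2/3" and v: "v^3 = real N + 1" "0 < v" and K: "40000000000 \<le> K"
  shows "a * bb N a k \<le> K / v * (\<Sum>i\<le>k. bb N a i) + 1/(real N + 1)^2"
proof -
  define M where "M = real N + 1"
  define F where "F = (\<Sum>i\<le>k. bb N a i)"
  have a1: "a < 1" using a by simp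
  have bnn: "\<And>j. 0 \<le> bb N a j" using a by (simp add: bb_nonneg)
  have ble: "\<And>j. bb N a j \<le> 1" using a by (simp add: bb_le1)
  have bF: "bb N a k \<le> F" unfolding F_def
    by (rule member_le_sum) (auto simp: bnn)
  have Mv: "M = v^3" using v M_def by simp
  have Mpos: "0 < M" unfolding M_def by simp
  have M2: "M^2 = v^6" using Mv by (simp add: power_mult[symmetric])
  have extra: "0 \<le> 1/M^2" by simp
  show ?thesis
  proof (cases "a * v \<le> K")
    case True
    have "a * bb N a k = (a * v) * bb N a k / v" using v by simp
    also have "\<dots> \<le> K * F / v"
      using True bF bnn[of k] v a K by (intro divide_right_mono mult_mono) auto
    also have "K * F / v = K / v * F" by simp
    finally have "a * bb N a k \<le> K / v * F" .
    thus ?thesis using extra unfolding F_def M_def by linarith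
  next
    case False
    hence avK: "K < a * v" by simp
    have "0 < a * v" using avK K by linarith
    hence apos: "0 < a" using v(2) a by (simp add: zero_less_mult_iff)
    have vK: "K < v"
    proof -
      have "a * v \<le> v" using a v by (simp add: mult_left_le_one_le)
      thus ?thesis using avK by simp
    qed
    define L where "L = nat \<lceil>a * v\<rceil>"
    define l where "l = real L"
    have l1: "a * v \<le> l" "l \<le> a * v + 1" unfolding l_def L_def
      using nat_ceil_bounds[of "a * v"] apos v by auto
    have lpos: "1 \<le> l" using l1 avK K by simp
    have L1: "1 \<le> L" using lpos l_def by simp
    have l2: "l \<le> 2 * a * v" using l1 avK K by simp
    show ?thesis
    proof (cases "M * a \<le> (real k + 1 - l) * (1 + 1/(3*l))")
      case True
      have fpos: "0 < 1 + 1/(3*l)" using lpos by (simp add: add_pos_pos)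
      have "0 < (real k + 1 - l) * (1 + 1/(3*l))" using True Mpos apos
        by (meson less_le_trans mult_pos_pos)
      hence kl: "0 < real k + 1 - l" using fpos by (simp add: zero_less_mult_iff)
      hence Lk: "L \<le> k" using l_def by simp
      define c where "c = l / (l + 1)"
      have c0: "0 \<le> c" "c \<le> 1" unfolding c_def using lpos by auto
      have cL: "1/3 \<le> c^L" unfolding c_def l_def using pow_ge_third L1 by simp
      have each: "bb N a k / 3 \<le> bb N a j" if j: "j \<in> {k-L..k}" for j
      proof -
        define i where "i = k - j"
        have ij: "j = k - i" "i \<le> L" "k - i + i = k" using j i_def by auto
        have "c^i * bb N a (k - i + i) \<le> bb N a (k - i)"
        proof (rule bb_decay[OF c0(1) a(1) a1])
          fix j' assume j': "k - i < j'" "j' \<le> k - i + i"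
          have jj: "real k + 1 - l \<le> real j'" using j' ij l_def by linarith
          have jnn: "0 \<le> real j'" by simp
          have h1: "M * a \<le> real j' * (1 + 1/(3*l))"
          proof -
            have "(real k + 1 - l) * (1 + 1/(3*l)) \<le> real j' * (1 + 1/(3*l))"
              using jj fpos by (intro mult_right_mono) auto
            thus ?thesis using True by linarith
          qed
          have h2: "l * (M * a) \<le> l * real j' + real j' / 3"
          proof -
            have "l * (M * a) \<le> l * (real j' * (1 + 1/(3*l)))" using h1 lpos by simp
            also have "\<dots> = l * real j' + real j' / 3" using lpos by (simp add: field_simps)
            finally show ?thesis .
          qed
          have "real j' * (1/3) \<le> real j' * (1 - a)" using a jnn by (intro mult_left_mono) auto
          hence h3: "real j' / 3 \<le> real j' * (1 - a)" by simp
          have "l * ((real N - real j' + 1) * a) \<le> (l + 1) * (real j' * (1-a))"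
            using h2 h3 unfolding M_def by (simp add: algebra_simps)
          hence "l * ((real N - real j' + 1) * a) / (l+1) \<le> real j' * (1-a)"
            using lpos by (simp add: field_simps)
          thus "c * (real N - real j' + 1) * a \<le> real j' * (1 - a)"
            unfolding c_def by (simp add: field_simps)
        qed
        hence "c^i * bb N a k \<le> bb N a j" using ij by simp
        moreover have "c^L \<le> c^i" using c0 ij by (intro power_decreasing) auto
        ultimately have "c^L * bb N a k \<le> bb N a j"
          by (meson bnn mult_right_mono order.trans)
        moreover have "(1/3) * bb N a k \<le> c^L * bb N a k" using cL bnn[of k] by (rule mult_right_mono)
        ultimately show ?thesis by simp
      qed
      have "(real L + 1) * (bb N a k / 3) = (\<Sum>j\<in>{k-L..k}. bb N a k / 3)"
        using Lk by simp
      also have "\<dots> \<le> (\<Sum>j\<in>{k-L..k}. bb N a j)" by (rule sum_mono) (rule each)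
      also have "\<dots> \<le> F" unfolding F_def by (rule sum_mono2) (auto simp: bnn)
      finally have hF: "(l + 1) * bb N a k \<le> 3 * F" unfolding l_def by simp
      have "(a * v) * bb N a k \<le> (l + 1) * bb N a k"
        using l1 bnn[of k] by (intro mult_right_mono) auto
      hence "a * bb N a k * v \<le> (l + 1) * bb N a k" by (simp add: mult_ac)
      hence "a * bb N a k * v \<le> 3 * F" using hF by simp
      hence "a * bb N a k \<le> 3 * F / v" using v by (simp add: field_simps)
      also have "\<dots> \<le> K * F / v" using K v bF bnn[of k]
        by (intro divide_right_mono mult_right_mono) auto
      also have "K * F / v = K / v * F" by simp
    finally have "a * bb N a k \<le> K / v * F" .
    thus ?thesis using extra unfolding F_def M_def by linarith
    next
      case False
      define d where "d = v^2 / 14"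
      have vpos2: "v^2 > 0" using v by simp
      have av1: "1 \<le> a * v" using avK K by simp
      have avv: "a * v \<le> v" using a v by (simp add: mult_left_le_one_le)
      have v28: "28 \<le> v" using vK K by simp
      have Ma: "M * a = v^2 * (a * v)" using Mv by (simp add: power3_eq_cube power2_eq_square mult_ac)
      have kbound: "real k \<le> M * a - d"
      proof -
        have c2: "(real k + 1 - l) * (1 + 1/(3*l)) < M * a" using False by simp
        have "(real k + 1 - l) * (1 + 1/(3*l)) * (3*l) < M*a*(3*l)"
          using c2 lpos by (intro mult_strict_right_mono) auto
        moreover have "(real k + 1 - l) * (1 + 1/(3*l)) * (3*l) = (real k + 1 - l) * (3*l+1)"
          using lpos by (simp add: field_simps)
        moreover have "M*a*(3*l) = 3*l*(M*a)" by simp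
        ultimately have e1: "(real k + 1 - l) * (3*l+1) < 3*l*(M*a)" by linarith
        have "3*l+1 \<le> 7 * (a * v)" using l2 av1 by simp
        hence "v^2/7 * (3*l+1) \<le> v^2/7 * (7 * (a * v))" using vpos2 by (intro mult_left_mono) auto
        moreover have "v^2/7 * (7 * (a * v)) = v^2 * (a * v)" by simp
        ultimately have e2: "v^2/7 * (3*l+1) \<le> M*a" using Ma by linarith
        have "(real k + 1 - l) * (3*l+1) < (M*a - v^2/7) * (3*l+1)"
        proof -
          have "(M*a - v^2/7) * (3*l+1) = 3*l*(M*a) + (M*a - v^2/7*(3*l+1))" by (simp add: algebra_simps)
          thus ?thesis using e1 e2 by linarith
        qed
        moreover have "0 \<le> 3*l+1" using lpos by simp
        ultimately have "real k + 1 - l < M*a - v^2/7"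
          by (rule mult_right_less_imp_less)
        moreover have "l \<le> 2 * v" using l2 avv by simp
        moreover have "2 * v \<le> v^2/14" using v28 v by (simp add: power2_eq_square)
        ultimately show ?thesis unfolding d_def by simp
      qed
      define s where "s = nat \<lfloor>d/2\<rfloor>"
      define e where "e = d / (2 * M * a)"
      have dpos: "0 < d" unfolding d_def using v by simp
      have sb: "d/2 - 1 \<le> real s" "real s \<le> d/2" unfolding s_def using nat_floor_bounds[of "d/2"] dpos by auto
      have epos: "0 < e" unfolding e_def using dpos Mpos apos by simp
      have eMa: "e * (M * a) = d/2" unfolding e_def using Mpos apos by (simp add: field_simps)
      have grow: "(1+e)^s * bb N a k \<le> bb N a (k+s)"
      proof (rule bb_growth)
        show "0 \<le> 1 + e" using epos by simp
        show "0 \<le> a" "a < 1" using a a1 by auto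
        fix j assume j: "k < j" "j \<le> k + s"
        have jr: "real j \<le> M * a - d/2" using j kbound sb by linarith
        have "real j * (1-a) \<le> real j * 1" using a by (intro mult_left_mono) auto
        hence j1: "real j * (1-a) \<le> M * a" using jr dpos by linarith
        have "e * (real j * (1-a)) \<le> e * (M * a)" using j1 epos by (intro mult_left_mono) auto
        hence "(1 + e) * real j * (1 - a) \<le> real j * (1-a) + d/2" using eMa by (simp add: algebra_simps)
        also have "\<dots> \<le> (real N - real j + 1) * a" using jr unfolding M_def by (simp add: algebra_simps)
        finally show "(1 + e) * real j * (1 - a) \<le> (real N - real j + 1) * a" .
      qed
      have eform: "e = 1 / (28 * (a * v))"
        unfolding e_def d_def Mv using v(2) apos by (simp add: field_simps power3_eq_cube power2_eq_square)
      have s56: "v^2/56 \<le> real s"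
      proof -
        have "28 * 28 \<le> v * v" using v28 by (intro mult_mono) auto
        hence "56 \<le> v^2" by (simp add: power2_eq_square)
        thus ?thesis using sb unfolding d_def by simp
      qed
      have s24: "24 \<le> s"
      proof -
        have "40 \<le> v" using vK K by simp
        hence "40 * 40 \<le> v * v" by (intro mult_mono) auto
        hence "24 * 56 \<le> v^2" by (simp add: power2_eq_square)
        thus ?thesis using s56 by simp
      qed
      have se: "v / 1568 \<le> real s * e"
      proof -
        have "v^2/56 * e \<le> real s * e" using s56 epos by (intro mult_right_mono) auto
        moreover have "v^2/56 * e = v / (1568 * a)" unfolding eform using v apos
          by (simp add: field_simps power2_eq_square)
        moreover have "v / 1568 \<le> v / (1568 * a)" using v apos a
          by (intro divide_left_mono) auto
        ultimately show ?thesis by linarith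
      qed
      have vbig: "v \<le> (v/37632)^2"
      proof -
        have "1416167424 \<le> v" using vK K by simp
        hence "v * 1416167424 \<le> v * v" using v by (intro mult_left_mono) auto
        thus ?thesis by (simp add: power2_eq_square field_simps)
      qed
      have "v \<le> (real s * e / 24)^2"
      proof -
        have "v/37632 \<le> real s * e / 24" using se by simp
        hence "(v/37632)^2 \<le> (real s * e / 24)^2" using v by (intro power_mono) auto
        thus ?thesis using vbig by linarith
      qed
      hence tp: "v^6 \<le> (1+e)^s" using tail_pow[of e s v] epos s24 v by simp
      have "v^6 * bb N a k \<le> (1+e)^s * bb N a k" using tp bnn[of k] by (rule mult_right_mono)
      also have "\<dots> \<le> 1" using grow ble[of "k+s"] by linarith
      finally have "v^6 * bb N a k \<le> 1" .
      hence "bb N a k \<le> 1 / M^2" unfolding M2 using v by (simp add: field_simps)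
      moreover have "a * bb N a k \<le> bb N a k" using a bnn[of k] by (simp add: mult_left_le_one_le)
      moreover have "0 \<le> K / v * F" using K v bF bnn[of k] by simp
      ultimately show ?thesis unfolding F_def M_def by linarith
    qed
  qed
qed


lemma Rstar:
  fixes N k :: nat and b v K :: real
  assumes b: "0 \<le> b" "b \<le> 2/3" and v: "v^3 = real N + 1" "0 < v"
    and K: "100000000000000000000000000000000000000000000000000000000 \<le> K" and k: "k < N"
  shows "b * bb N b k \<le> K / v * (\<Sum>i\<in>{Suc k..N}. bb N b i) + 1/(real N + 1)^2"
proof -
  define M where "M = real N + 1"
  define G where "G = (\<Sum>i\<in>{Suc k..N}. bb N b i)"
  have b1: "b < 1" using b by simp
  have bnn: "\<And>j. 0 \<le> bb N b j" using b by (simp add: bb_nonneg)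
  have ble: "\<And>j. bb N b j \<le> 1" using b by (simp add: bb_le1)
  have bG: "bb N b (Suc k) \<le> G" unfolding G_def
    by (rule member_le_sum) (use k in \<open>auto simp: bnn\<close>)
  have Gnn: "0 \<le> G" using bG bnn[of "Suc k"] by linarith
  have Mv: "M = v^3" using v M_def by simp
  have Mpos: "0 < M" unfolding M_def by simp
  have M2: "M^2 = v^6" using Mv by (simp add: power_mult[symmetric])
  have extra: "0 \<le> 1/M^2" by simp
  have KvG: "0 \<le> K / v * G" using K v Gnn by simp
  have ratio: "bb N b (Suc k) * (real k + 1) * (1-b) = bb N b k * (real N - real k) * b"
    by (rule bb_ratio)
  have Nk: "1 \<le> real N - real k" using k by simp
  have fin: "b * bb N b k \<le> K / v * G \<Longrightarrow> ?thesis"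
    using extra unfolding G_def M_def by linarith
  have fin2: "b * bb N b k \<le> 1 / M^2 \<Longrightarrow> ?thesis"
    using KvG unfolding G_def M_def by linarith
  show ?thesis
  proof (cases "b = 0")
    case True thus ?thesis using fin KvG by simp
  next
    case False
    hence bpos: "0 < b" using b by simp
    show ?thesis
    proof (cases "v \<le> 100000000000000")
      case True
      have "0 \<le> b * bb N b k" using bpos bnn[of k] by simp
      hence "b * bb N b k * 1 \<le> b * bb N b k * (real N - real k)"
        by (rule mult_left_mono[OF Nk])
      hence "b * bb N b k \<le> b * bb N b k * (real N - real k)" by simp
      also have "\<dots> = bb N b (Suc k) * ((real k + 1) * (1-b))" using ratio by (simp add: mult_ac)
      also have "\<dots> \<le> bb N b (Suc k) * M"
      proof (intro mult_left_mono)
        have "(real k + 1) * (1-b) \<le> (real k + 1) * 1" using b by (intro mult_left_mono) auto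
        hence "(real k + 1) * (1-b) \<le> real k + 1" by simp
        moreover have "real k + 1 \<le> real N" using k by simp
        ultimately show "(real k + 1) * (1 - b) \<le> M" unfolding M_def by linarith
      qed (rule bnn)
      also have "\<dots> \<le> G * M" using bG Mpos by (intro mult_right_mono) auto
      also have "\<dots> \<le> K / v * G"
      proof -
        have "v^4 \<le> 100000000000000^4" using True v by (intro power_mono) auto
        hence "v * M \<le> K" using K Mv by (simp add: power3_eq_cube power4_eq_xxxx mult_ac)
        hence "M \<le> K / v" using v by (simp add: field_simps)
        hence "G * M \<le> G * (K / v)" using Gnn by (rule mult_left_mono)
        thus ?thesis by (simp add: mult.commute)
      qed
      finally show ?thesis by (rule fin)
    next
      case False
      hence vbig: "100000000000000 < v" by simp
      have v1: "1 \<le> v" using vbig by simp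
      have Mb: "M * b = v^2 * (b * v)" using Mv by (simp add: power3_eq_cube power2_eq_square mult_ac)
      have bv: "b * v \<le> v" using b v by (simp add: mult_left_le_one_le)
      show ?thesis
      proof (cases "b * v < 1/16")
        case True
        show ?thesis
        proof (cases "real (Suc k) * v \<le> real N - real k")
          case True
          have "v * (b * bb N b k * (real N - real k)) = v * (bb N b (Suc k) * (real k + 1) * (1-b))"
            using ratio by (simp add: mult_ac)
          also have "\<dots> \<le> v * (bb N b (Suc k) * (real k + 1))"
          proof -
            have "bb N b (Suc k) * (real k + 1) * (1-b) \<le> bb N b (Suc k) * (real k + 1) * 1"
              using b bnn[of "Suc k"] by (intro mult_left_mono) auto
            thus ?thesis using v by (intro mult_left_mono) auto
          qed
          also have "\<dots> = bb N b (Suc k) * (real (Suc k) * v)" by (simp add: mult_ac)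
          also have "\<dots> \<le> bb N b (Suc k) * (real N - real k)"
            using True bnn[of "Suc k"] by (rule mult_left_mono)
          finally have "(v * b * bb N b k) * (real N - real k) \<le> bb N b (Suc k) * (real N - real k)"
            by (simp add: mult_ac)
          hence "v * b * bb N b k \<le> bb N b (Suc k)"
            by (rule mult_right_le_imp_le) (use Nk in linarith)
          hence "v * (b * bb N b k) \<le> G" using bG by (simp add: mult_ac)
          hence "b * bb N b k \<le> G / v" using v by (simp add: field_simps)
          also have "\<dots> \<le> K / v * G"
          proof -
            have "1 * G \<le> K * G" using K Gnn by (intro mult_right_mono) auto
            hence "G / v \<le> K * G / v" using v by (intro divide_right_mono) auto
            thus ?thesis by simp
          qed
          finally show ?thesis by (rule fin)
        next
          case False
          hence f1: "real N - real k < (real k + 1) * v" by (simp add: add.commute)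
          have kv: "v^2 / 2 \<le> real k"
          proof (rule ccontr)
            assume "\<not> ?thesis"
            hence "real k + 1 < v^2/2 + 1" by simp
            hence "(real k + 1) * (v + 1) \<le> (v^2/2 + 1) * (v + 1)" using v by (intro mult_right_mono) auto
            moreover have "(v^2/2 + 1) * (v + 1) \<le> v^3"
            proof -
              have "4 \<le> v" using vbig by simp
              hence "v^2 * 4 \<le> v^2 * v" by (intro mult_left_mono) auto
              hence h1: "v^2 * 4 \<le> v^3" by (simp add: power3_eq_cube power2_eq_square)
              have "4 * v \<le> v * v" using \<open>4 \<le> v\<close> v by (intro mult_right_mono) auto
              hence h2: "4 * v \<le> v^2" by (simp add: power2_eq_square)
              have "(v^2/2 + 1) * (v + 1) = v^3/2 + v^2/2 + v + 1"
                by (simp add: algebra_simps power2_eq_square power3_eq_cube)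
              thus ?thesis using h1 h2 vbig by linarith
            qed
            ultimately have "(real k + 1) * (v + 1) \<le> real N + 1" using v(1) by linarith
            thus False using f1 by (simp add: algebra_simps)
          qed
          define k0 where "k0 = nat \<lceil>3 * v^2 / 8\<rceil>"
          have k0b: "3 * v^2/8 \<le> real k0" "real k0 \<le> 3 * v^2/8 + 1"
            unfolding k0_def using nat_ceil_bounds[of "3 * v^2 / 8"] by auto
          have v2big: "16 + 16 * 24 * 2 \<le> v^2"
          proof -
            have "1000 \<le> v" using vbig by simp
            hence "1000 * 1000 \<le> v * v" by (intro mult_mono) auto
            thus ?thesis by (simp add: power2_eq_square)
          qed
          have k0k: "k0 \<le> k" using k0b kv v2big by simp
          define sn where "sn = k - k0"
          have sn: "real sn \<ge> v^2 / 16" unfolding sn_def using k0k k0b kv v2big by (simp add: of_nat_diff)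
          have dec: "2^sn * bb N b (k0 + sn) \<le> bb N b k0"
          proof (rule bb_decay)
            show "(0::real) \<le> 2" "0 \<le> b" "b < 1" using b1 b by auto
            fix j assume j: "k0 < j" "j \<le> k0 + sn"
            have jk: "j \<le> k" using j k0k sn_def by simp
            have "(real N - real j + 1) * b \<le> M * b" unfolding M_def using b by (simp add: mult_right_mono)
            also have "\<dots> \<le> v^2 / 16"
            proof -
              have "v^2 * (b * v) \<le> v^2 * (1/16)" using True by (intro mult_left_mono) auto
              moreover have "v^2 * (1/16) = v^2/16" by simp
              ultimately show ?thesis using Mb by linarith
            qed
            finally have h0: "(real N - real j + 1) * b \<le> v^2/16" .
            have "2 * (real N - real j + 1) * b = 2 * ((real N - real j + 1) * b)" by simp
            hence h1: "2 * (real N - real j + 1) * b \<le> v^2/8" using h0 by linarith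
            have "real j * (1/3) \<le> real j * (1-b)" using b by (intro mult_left_mono) auto
            moreover have "3 * v^2 / 8 \<le> real j" using j k0b by simp
            ultimately show "2 * (real N - real j + 1) * b \<le> real j * (1 - b)" using h1 by linarith
          qed
          have ksn: "k0 + sn = k" unfolding sn_def using k0k by simp
          have sn24: "24 \<le> sn" using sn v2big by simp
          have "v \<le> (real sn * 1 / 24)^2"
          proof -
            have "1000 \<le> v" using vbig by simp
            hence "1000 * v \<le> v * v" using v by (intro mult_right_mono) auto
            hence "v \<le> (v * v) / 384" using v by linarith
            hence "v \<le> v^2 / 384" by (simp add: power2_eq_square)
            also have "\<dots> \<le> real sn / 24" using sn by simp
            finally have h: "v \<le> real sn / 24" .
            hence "v * 1 \<le> (real sn / 24) * (real sn / 24)" using v1 by (intro mult_mono) auto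
            thus ?thesis by (simp add: power2_eq_square)
          qed
          hence tp: "v^6 \<le> (1+1)^sn" using tail_pow[of 1 sn v] sn24 v by simp
          have "v^6 * bb N b k \<le> 2^sn * bb N b k" using tp bnn[of k] by (intro mult_right_mono) auto
          also have "\<dots> \<le> 1" using dec ksn ble[of k0] by simp
          finally have "v^6 * bb N b k \<le> 1" .
          hence "bb N b k \<le> 1 / M^2" unfolding M2 using v by (simp add: field_simps)
          moreover have "b * bb N b k \<le> bb N b k" using b bnn[of k] by (simp add: mult_left_le_one_le)
          ultimately show ?thesis using fin2 by linarith
        qed
      next
        case False
        hence bv16: "1/16 \<le> b * v" by simp
        define L where "L = nat \<lceil>b * v\<rceil>"
        define l where "l = real L"
        have l1: "b * v \<le> l" "l \<le> b * v + 1" unfolding l_def L_def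
          using nat_ceil_bounds[of "b * v"] bpos v by auto
        have "0 < b * v" using bpos v by simp
        hence lpos0: "0 < l" using l1 by linarith
        hence L1: "1 \<le> L" using l_def by simp
        hence lpos: "1 \<le> l" using l_def by simp
        have l17: "l \<le> 17 * (b * v)" using l1 bv16 by linarith
        have l33: "l + 1 \<le> 33 * (b * v)" using l1 bv16 by linarith
        show ?thesis
        proof (cases "(real k + l) * (1-b) \<le> (M - real k - l) * b * (1 + 1/l)")
          case True
          define c where "c = l / (l + 1)"
          have c0: "0 \<le> c" "c \<le> 1" unfolding c_def using lpos by auto
          have cL: "1/3 \<le> c^L" unfolding c_def l_def using pow_ge_third L1 by simp
          have cc: "c * (1 + 1/l) = 1"
          proof -
            have "1 + 1/l = (l+1)/l" using lpos by (simp add: field_simps)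
            moreover have "l + 1 \<noteq> 0" "l \<noteq> 0" using lpos by auto
            ultimately show ?thesis unfolding c_def by simp
          qed
          have each: "bb N b k / 3 \<le> bb N b j" if j: "j \<in> {Suc k..k+L}" for j
          proof -
            define i where "i = j - k"
            have ij: "j = k + i" "i \<le> L" using j i_def by auto
            have "c^i * bb N b k \<le> bb N b (k + i)"
            proof (rule bb_growth[OF c0(1) b(1) b1])
              fix j' assume j': "k < j'" "j' \<le> k + i"
              have jj: "real j' \<le> real k + l" using j' ij l_def by linarith
              have "real j' * (1-b) \<le> (real k + l) * (1-b)" using jj b by (intro mult_right_mono) auto
              also have "\<dots> \<le> (M - real k - l) * b * (1 + 1/l)" by (rule True)
              also have "\<dots> \<le> (M - real j') * b * (1 + 1/l)"
                using jj bpos lpos by (intro mult_right_mono) auto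
              finally have "c * (real j' * (1-b)) \<le> c * ((M - real j') * b * (1 + 1/l))"
                using c0 by (intro mult_left_mono) auto
              also have "\<dots> = (c * (1 + 1/l)) * ((M - real j') * b)" by (simp only: mult_ac)
              also have "\<dots> = (M - real j') * b" using cc by simp
              finally show "c * real j' * (1 - b) \<le> (real N - real j' + 1) * b"
                unfolding M_def by (simp add: algebra_simps)
            qed
            hence "c^i * bb N b k \<le> bb N b j" using ij by simp
            moreover have "c^L \<le> c^i" using c0 ij by (intro power_decreasing) auto
            ultimately have "c^L * bb N b k \<le> bb N b j"
              by (meson bnn mult_right_mono order.trans)
            moreover have "(1/3) * bb N b k \<le> c^L * bb N b k" using cL bnn[of k] by (rule mult_right_mono)
            ultimately show ?thesis by simp
          qed
          have "real L * (bb N b k / 3) = (\<Sum>j\<in>{Suc k..k+L}. bb N b k / 3)" by simp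
          also have "\<dots> \<le> (\<Sum>j\<in>{Suc k..k+L}. bb N b j)" by (rule sum_mono) (rule each)
          also have "\<dots> = (\<Sum>j\<in>{Suc k..k+L} \<inter> {..N}. bb N b j)"
            by (intro sum.mono_neutral_right) (auto, metis bb_zero leI)
          also have "\<dots> \<le> G" unfolding G_def by (rule sum_mono2) (auto simp: bnn)
          finally have hG: "l * bb N b k \<le> 3 * G" unfolding l_def by simp
          have "(b * v) * bb N b k \<le> l * bb N b k"
            using l1 bnn[of k] by (intro mult_right_mono) auto
          hence "b * bb N b k * v \<le> 3 * G" using hG by (simp add: mult_ac)
          hence "b * bb N b k \<le> 3 * G / v" using v by (simp add: field_simps)
          also have "\<dots> \<le> K * G / v" using K v Gnn
            by (intro divide_right_mono mult_right_mono) auto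
          also have "K * G / v = K / v * G" by simp
          finally show ?thesis by (rule fin)
        next
          case False
          hence c2: "(M - real k - l) * b * (1 + 1/l) < (real k + l) * (1-b)" by simp
          define d where "d = v^2 / 198"
          have v2: "v^2 = v * v" by (simp add: power2_eq_square)
          have kbound: "M * b + d \<le> real k"
          proof -
            have "(M - real k - l) * b * (1 + 1/l) * l < (real k + l) * (1-b) * l"
              using c2 lpos by (intro mult_strict_right_mono) auto
            moreover have "(M - real k - l) * b * (1 + 1/l) * l = (M - real k - l) * b * (l + 1)"
              using lpos by (simp add: field_simps)
            moreover have "(M - real k - l) * b * (l + 1) = M*b*(l+1) - (real k + l)*(b*(l+1))"
              by (simp add: algebra_simps)
            moreover have "(real k + l) * (l + b) = (real k + l)*(1-b)*l + (real k + l)*(b*(l+1))"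
              by (simp add: algebra_simps)
            ultimately have e1: "M * b * (l+1) < (real k + l) * (l + b)"
              by linarith
            have kl: "M * b + v^2/99 < real k + l"
            proof (rule ccontr)
              assume "\<not> ?thesis"
              hence "real k + l \<le> M * b + v^2/99" by simp
              hence "(real k + l) * (l + b) \<le> (M * b + v^2/99) * (l + b)"
                using lpos b by (intro mult_right_mono) auto
              moreover have "(M * b + v^2/99) * (l + b) \<le> M * b * (l + 1)"
              proof -
                have "v^2/99 * (l + b) \<le> v^2/99 * (33 * (b * v))"
                  using l33 b1 by (intro mult_left_mono) auto
                also have "\<dots> = v^2 * (b * v) / 3" by simp
                also have "\<dots> = M * b / 3" by (simp only: Mb)
                also have "\<dots> \<le> M * b * (1 - b)"
                proof -
                  have "M * b * (1/3) \<le> M * b * (1 - b)" using b Mpos bpos by (intro mult_left_mono) auto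
                  thus ?thesis by simp
                qed
                finally have "v^2/99 * (l + b) \<le> M * b * (1 - b)" .
                moreover have "(M * b + v^2/99) * (l + b) = M * b * (l + b) + v^2/99 * (l + b)"
                  by (simp add: algebra_simps)
                moreover have "M * b * (l + 1) = M * b * (l + b) + M * b * (1 - b)"
                  by (simp add: algebra_simps)
                ultimately show ?thesis by linarith
              qed
              ultimately show False using e1 by linarith
            qed
            moreover have "l \<le> v + 1" using l1 bv by linarith
            moreover have "v + 1 \<le> v^2/198"
            proof -
              have "1000 \<le> v" using vbig by simp
              hence "1000 * v \<le> v * v" using v by (intro mult_right_mono) auto
              thus ?thesis using v2 v1 by linarith
            qed
            ultimately show ?thesis unfolding d_def by linarith
          qed
          define sn where "sn = nat \<lfloor>d/2\<rfloor>"
          define e where "e = d / (2 * M * b)"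
          have dpos: "0 < d" unfolding d_def using v by simp
          have sb: "d/2 - 1 \<le> real sn" "real sn \<le> d/2" unfolding sn_def
            using nat_floor_bounds[of "d/2"] dpos by auto
          have epos: "0 < e" unfolding e_def using dpos Mpos bpos by simp
          have eMb: "e * (M * b) = d/2" unfolding e_def using Mpos bpos by (simp add: field_simps)
          have "0 \<le> M * b" using Mpos bpos by simp
          hence "real sn \<le> real k" using sb kbound dpos by linarith
          hence snk: "sn \<le> k" by simp
          define k0 where "k0 = k - sn"
          have ksn: "k0 + sn = k" unfolding k0_def using snk by simp
          have dec: "(1+e)^sn * bb N b (k0 + sn) \<le> bb N b k0"
          proof (rule bb_decay)
            show "0 \<le> 1 + e" using epos by simp
            show "0 \<le> b" "b < 1" using b b1 by auto
            fix j assume j: "k0 < j" "j \<le> k0 + sn"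
            have jr: "M * b + d/2 \<le> real j" using j ksn kbound sb snk unfolding k0_def
              by (simp add: of_nat_diff)
            have jk: "j \<le> k" using j ksn by simp
            have Mj: "0 \<le> M - real j" using jk k unfolding M_def by simp
            have "(M - real j) * b \<le> M * b" using bpos by (simp add: mult_right_mono)
            hence "e * ((M - real j) * b) \<le> e * (M * b)" using epos by (intro mult_left_mono) auto
            hence "(1 + e) * (M - real j) * b \<le> (M - real j) * b + d/2" using eMb by (simp add: algebra_simps)
            also have "\<dots> \<le> real j * (1 - b)" using jr by (simp add: algebra_simps)
            finally show "(1 + e) * (real N - real j + 1) * b \<le> real j * (1 - b)"
              unfolding M_def by (simp add: algebra_simps)
          qed
          have eform: "e = 1 / (396 * (b * v))"
            unfolding e_def d_def Mv using v(2) bpos by (simp add: field_simps power3_eq_cube power2_eq_square)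
          have v1000: "1000 \<le> v" using vbig by simp
          have vv: "1000 * 1000 \<le> v * v" using v1000 by (intro mult_mono) auto
          have s792: "v^2/792 \<le> real sn" using sb vv v2 unfolding d_def by simp
          have s24: "24 \<le> sn" using s792 vv v2 by simp
          have se: "v / 313632 \<le> real sn * e"
          proof -
            have "v^2/792 * e \<le> real sn * e" using s792 epos by (intro mult_right_mono) auto
            moreover have "v^2/792 * e = v / (313632 * b)" unfolding eform using v bpos
              by (simp add: field_simps power2_eq_square)
            moreover have "v / 313632 \<le> v / (313632 * b)" using v bpos b
              by (intro divide_left_mono) auto
            ultimately show ?thesis by linarith
          qed
          have vbig2: "v \<le> (v/7527168)^2"
          proof -
            have "56658258100224 \<le> v" using vbig by simp
            hence "v * 56658258100224 \<le> v * v" using v by (intro mult_left_mono) auto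
            thus ?thesis by (simp add: power2_eq_square field_simps)
          qed
          have "v \<le> (real sn * e / 24)^2"
          proof -
            have "v/7527168 \<le> real sn * e / 24" using se by simp
            hence "(v/7527168)^2 \<le> (real sn * e / 24)^2" using v by (intro power_mono) auto
            thus ?thesis using vbig2 by linarith
          qed
          hence tp: "v^6 \<le> (1+e)^sn" using tail_pow[of e sn v] epos s24 v by simp
          have "v^6 * bb N b k \<le> (1+e)^sn * bb N b k" using tp bnn[of k] by (rule mult_right_mono)
          also have "\<dots> \<le> 1" using dec ksn ble[of k0] by simp
          finally have "v^6 * bb N b k \<le> 1" .
          hence "bb N b k \<le> 1 / M^2" unfolding M2 using v by (simp add: field_simps)
          moreover have "b * bb N b k \<le> bb N b k" using b bnn[of k] by (simp add: mult_left_le_one_le)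
          ultimately show ?thesis using fin2 by linarith
        qed
      qed
    qed
  qed
qed



lemma set_pmf_binom_sub: "0 \<le> a \<Longrightarrow> a \<le> 1 \<Longrightarrow> set_pmf (binomial_pmf N a) \<subseteq> {..N}"
  by (auto simp: set_pmf_iff bb_pmf bb_zero leI)

lemma Pgap_double:
  assumes "0 \<le> p" "p \<le> 1" "0 \<le> q" "q \<le> 1"
  shows "Pgap m n p q = (\<Sum>i\<le>m. \<Sum>j\<le>n. if i \<le> j then bb m (max p q) i * bb n (min p q) j else 0)"
proof -
  define a where "a = max p q"
  define b where "b = min p q"
  have a: "0 \<le> a" "a \<le> 1" and b: "0 \<le> b" "b \<le> 1" using assms unfolding a_def b_def by auto
  define P where "P = pair_pmf (binomial_pmf m a) (binomial_pmf n b)"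
  define S where "S = {xy :: nat \<times> nat. snd xy \<ge> fst xy}"
  define T where "T = {..m} \<times> {..n}"
  have sub: "set_pmf P \<subseteq> T" unfolding P_def T_def
    using set_pmf_binom_sub[OF a] set_pmf_binom_sub[OF b] by auto
  have "measure_pmf.prob P S = measure_pmf.prob P (S \<inter> set_pmf P)"
    by (rule measure_Int_set_pmf[symmetric])
  also have "S \<inter> set_pmf P = (S \<inter> T) \<inter> set_pmf P" using sub by auto
  also have "measure_pmf.prob P \<dots> = measure_pmf.prob P (S \<inter> T)" by (rule measure_Int_set_pmf)
  also have "\<dots> = sum (pmf P) (S \<inter> T)"
    by (rule measure_measure_pmf_finite) (simp add: T_def)
  also have "\<dots> = sum (pmf P) (T \<inter> S)" by (simp add: Int_commute)
  also have "\<dots> = (\<Sum>x\<in>T. if x \<in> S then pmf P x else 0)"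
    by (rule sum.inter_restrict) (simp add: T_def)
  also have "\<dots> = (\<Sum>i\<le>m. \<Sum>j\<le>n. (\<lambda>x. if x \<in> S then pmf P x else 0) (i,j))"
    unfolding T_def by (simp add: sum.cartesian_product)
  also have "\<dots> = (\<Sum>i\<le>m. \<Sum>j\<le>n. if i \<le> j then bb m a i * bb n b j else 0)"
    by (intro sum.cong refl) (auto simp: S_def P_def pmf_pair bb_def a b)
  finally show ?thesis unfolding Pgap_def P_def S_def a_def b_def .
qed

lemma tail_eq: "(\<Sum>j\<in>{i..N}. bb N a j) = 1 - (\<Sum>j<i. bb N a j)"
proof -
  have "(\<Sum>j<i. bb N a j) + (\<Sum>j\<in>{i..N}. bb N a j) = (\<Sum>j\<in>{..<i} \<union> {i..N}. bb N a j)"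
    by (rule sum.union_disjoint[symmetric]) auto
  also have "\<dots> = (\<Sum>j\<le>N. bb N a j)"
    by (rule sum.mono_neutral_right) (auto simp: bb_zero)
  finally show ?thesis using bb_sum[of N a] by simp
qed

lemma Pgap_left:
  assumes "0 \<le> p" "p \<le> 1" "0 \<le> q" "q \<le> 1"
  shows "Pgap m n p q = (\<Sum>j\<le>n. bb n (min p q) j * (\<Sum>i\<le>j. bb m (max p q) i))"
proof -
  define a where "a = max p q"
  define b where "b = min p q"
  have "Pgap m n p q = (\<Sum>i\<le>m. \<Sum>j\<le>n. if i \<le> j then bb m a i * bb n b j else 0)"
    using Pgap_double[OF assms] unfolding a_def b_def .
  also have "\<dots> = (\<Sum>j\<le>n. \<Sum>i\<le>m. if i \<le> j then bb m a i * bb n b j else 0)"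
    by (rule sum.swap)
  also have "\<dots> = (\<Sum>j\<le>n. bb n b j * (\<Sum>i\<le>j. bb m a i))"
  proof (intro sum.cong refl)
    fix j
    have "(\<Sum>i\<le>m. if i \<le> j then bb m a i * bb n b j else 0) = (\<Sum>i\<in>{..m} \<inter> {..j}. bb m a i * bb n b j)"
      by (subst sum.inter_restrict) auto
    also have "\<dots> = (\<Sum>i\<le>j. bb m a i * bb n b j)"
      by (rule sum.mono_neutral_left) (auto, metis bb_zero leI)
    also have "\<dots> = bb n b j * (\<Sum>i\<le>j. bb m a i)"
      by (simp add: sum_distrib_left mult.commute)
    finally show "(\<Sum>i\<le>m. if i \<le> j then bb m a i * bb n b j else 0) = bb n b j * (\<Sum>i\<le>j. bb m a i)" .
  qed
  finally show ?thesis unfolding a_def b_def .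
qed

lemma Pgap_right:
  assumes "0 \<le> p" "p \<le> 1" "0 \<le> q" "q \<le> 1"
  shows "Pgap m n p q = (\<Sum>i\<le>m. bb m (max p q) i * (\<Sum>j\<in>{i..n}. bb n (min p q) j))"
proof -
  define a where "a = max p q"
  define b where "b = min p q"
  have "Pgap m n p q = (\<Sum>i\<le>m. \<Sum>j\<le>n. if i \<le> j then bb m a i * bb n b j else 0)"
    using Pgap_double[OF assms] unfolding a_def b_def .
  also have "\<dots> = (\<Sum>i\<le>m. bb m a i * (\<Sum>j\<in>{i..n}. bb n b j))"
  proof (intro sum.cong refl)
    fix i
    have "(\<Sum>j\<le>n. if i \<le> j then bb m a i * bb n b j else 0) = (\<Sum>j\<in>{..n} \<inter> {i..}. bb m a i * bb n b j)"
      by (subst sum.inter_restrict) auto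
    also have "{..n} \<inter> {i..} = {i..n}" by auto
    also have "(\<Sum>j\<in>{i..n}. bb m a i * bb n b j) = bb m a i * (\<Sum>j\<in>{i..n}. bb n b j)"
      by (simp add: sum_distrib_left)
    finally show "(\<Sum>j\<le>n. if i \<le> j then bb m a i * bb n b j else 0) = bb m a i * (\<Sum>j\<in>{i..n}. bb n b j)" .
  qed
  finally show ?thesis unfolding a_def b_def .
qed

lemma F_rec: "(\<Sum>i\<le>j. bb (Suc N) a i) = (\<Sum>i\<le>j. bb N a i) - a * bb N a j"
proof (induction j)
  case 0 thus ?case by (simp add: bb_pascal0 algebra_simps)
next
  case (Suc j)
  thus ?case by (simp add: bb_pascal algebra_simps)
qed

lemma G_rec: "(\<Sum>j\<in>{Suc i..Suc N}. bb (Suc N) b j) = (\<Sum>j\<in>{Suc i..N}. bb N b j) + b * bb N b i"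
proof -
  have "(\<Sum>j\<in>{Suc i..Suc N}. bb (Suc N) b j) = 1 - (\<Sum>j\<le>i. bb (Suc N) b j)"
    using tail_eq[where i="Suc i" and N="Suc N" and a=b] by (simp add: lessThan_Suc_atMost)
  moreover have "(\<Sum>j\<in>{Suc i..N}. bb N b j) = 1 - (\<Sum>j\<le>i. bb N b j)"
    using tail_eq[where i="Suc i" and N=N and a=b] by (simp add: lessThan_Suc_atMost)
  ultimately show ?thesis using F_rec[where j=i and N=N and a=b] by simp
qed

lemma G_zero: "(\<Sum>j\<in>{0..N}. bb N b j) = 1"
  using tail_eq[where i=0 and N=N and a=b] by simp


lemma badterm:
  fixes m n :: nat and a b v K :: real
  assumes a: "0 \<le> a" "a \<le> 2/3" and b: "0 \<le> b" "b \<le> 2/3"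
    and n: "1 \<le> n" and v: "v^3 = real n" "0 < v" and K: "2500 \<le> K"
  shows "bb m a n * b^n \<le> K / v * (bb m a (n-1) * b^(n-1)) + 1/(real n)^2"
proof -
  have xnn: "\<And>j. 0 \<le> bb m a j" using a by (simp add: bb_nonneg)
  have xle: "\<And>j. bb m a j \<le> 1" using a by (simp add: bb_le1)
  have bn: "0 \<le> b^n" "b^n \<le> 1" using b by (auto simp: power_le_one)
  have R0: "0 \<le> K / v * (bb m a (n-1) * b^(n-1))" using K v b xnn by simp
  have fin: "bb m a n * b^n \<le> 1/(real n)^2 \<Longrightarrow> ?thesis" using R0 by linarith
  have n2: "(real n)^2 = v^6"
  proof -
    have "(v^3)^2 = v^6" by (simp add: power_mult[symmetric])
    thus ?thesis using v by simp
  qed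
  show ?thesis
  proof (cases "5 \<le> v")
    case True
    have v5: "3125 \<le> v^5" using power_mono[OF True, of 5] by simp
    have n24: "24 \<le> n"
    proof -
      have "125 \<le> v^3" using power_mono[OF True, of 3] by simp
      thus ?thesis using v by simp
    qed
    have "v \<le> (real n * (1/2) / 24)^2"
    proof -
      have "(real n * (1/2) / 24)^2 = (real n)^2 / 2304" by (simp add: power2_eq_square)
      hence "(real n * (1/2) / 24)^2 = v^6 / 2304" using n2 by simp
      moreover have "v * 2304 \<le> v * v^5" using v5 v by (intro mult_left_mono) auto
      moreover have "v * v^5 = v^6" by (simp add: eval_nat_numeral)
      ultimately show ?thesis by simp
    qed
    hence tp: "v^6 \<le> (1 + 1/2)^n" using tail_pow[of "1/2" n v] n24 v by simp
    have "b^n \<le> (2/3)^n" using b by (intro power_mono) auto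
    also have "(2/3::real)^n = 1 / (3/2)^n" by (simp add: power_divide)
    also have "\<dots> \<le> 1 / v^6" using tp v by (intro divide_left_mono) auto
    finally have "b^n \<le> 1/(real n)^2" using n2 by simp
    moreover have "bb m a n * b^n \<le> b^n" using mult_right_mono[OF xle[of n] bn(1)] by simp
    ultimately show ?thesis using fin by linarith
  next
    case False
    hence v5: "v < 5" by simp
    have nlt: "real n < 125"
    proof -
      have "v^3 < 5^3" using v5 v by (intro power_strict_mono) auto
      thus ?thesis using v by simp
    qed
    have Kv: "500 \<le> K / v" using K v v5 by (simp add: field_simps)
    have r: "bb m a n * real n * (1-a) = bb m a (n-1) * (real m - real n + 1) * a"
      using bb_ratio[of m a "n-1"] n by (simp add: of_nat_diff)
    show ?thesis
    proof (cases "(real m - real n + 1) * a \<le> 500 * real n * (1-a)")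
      case True
      have "bb m a n * (real n * (1-a)) = bb m a (n-1) * ((real m - real n + 1) * a)"
        using r by (simp add: mult_ac)
      also have "\<dots> \<le> bb m a (n-1) * (500 * real n * (1-a))"
        using True xnn by (rule mult_left_mono)
      also have "\<dots> = (500 * bb m a (n-1)) * (real n * (1-a))" by simp
      finally have "bb m a n \<le> 500 * bb m a (n-1)"
        by (rule mult_right_le_imp_le) (use n a in simp)
      hence "bb m a n * b^n \<le> (500 * bb m a (n-1)) * b^n" using bn by (intro mult_right_mono) auto
      also have "\<dots> \<le> (500 * bb m a (n-1)) * b^(n-1)"
      proof -
        have "b^n \<le> b^(n-1)" using b n by (intro power_decreasing) auto
        thus ?thesis using xnn by (intro mult_left_mono) auto
      qed
      also have "\<dots> \<le> K / v * (bb m a (n-1) * b^(n-1))"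
      proof -
        have "0 \<le> bb m a (n-1) * b^(n-1)" using xnn b by simp
        hence "500 * (bb m a (n-1) * b^(n-1)) \<le> K / v * (bb m a (n-1) * b^(n-1))"
          using Kv by (intro mult_right_mono) auto
        thus ?thesis by (simp add: mult_ac)
      qed
      finally have "bb m a n * b^n \<le> K / v * (bb m a (n-1) * b^(n-1))" .
      moreover have "0 \<le> 1/(real n)^2" by simp
      ultimately show ?thesis by linarith
    next
      case False
      hence F1: "500 * real n * (1-a) < (real m - real n + 1) * a" by simp
      have apos: "0 < a"
      proof (rule ccontr)
        assume "\<not> 0 < a" hence "a = 0" using a by simp
        thus False using F1 n by simp
      qed
      have mn: "250 * real n < real m - real n + 1"
      proof -
        have "a/2 \<le> 1 - a" using a by simp
        hence "500 * real n * (a/2) \<le> 500 * real n * (1-a)" by (intro mult_left_mono) auto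
        moreover have "500 * real n * (a/2) = (250 * real n) * a" by simp
        ultimately have "(250 * real n) * a < (real m - real n + 1) * a" using F1 by linarith
        thus ?thesis using apos by (simp add: mult_less_cancel_right)
      qed
      have grow: "bb m a n \<le> bb m a j" if j: "j \<in> {n..<n + n*n}" for j
      proof -
        have "1^(j-n) * bb m a n \<le> bb m a (n + (j-n))"
        proof (rule bb_growth)
          show "(0::real) \<le> 1" "0 \<le> a" "a < 1" using a by auto
          fix j' assume j': "n < j'" "j' \<le> n + (j - n)"
          have "j' \<le> n + n * n" using j' j by simp
          hence jl: "real j' \<le> real n + real n * real n" by (metis of_nat_add of_nat_mult of_nat_le_iff)
          have jn: "real j' - real n \<le> real n * real n" using jl by simp
          have nn: "real n * real n \<le> 125 * real n" using nlt by (intro mult_right_mono) auto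
          have "(real j' - real n) * a \<le> (real n * real n) * a" using a by (intro mult_right_mono[OF jn]) auto
          also have "\<dots> \<le> (125 * real n) * a" using a by (intro mult_right_mono[OF nn]) auto
          also have "\<dots> \<le> (real m - real n + 1) / 2 * a" using a mn by (intro mult_right_mono) auto
          finally have h1: "(real j' - real n) * a \<le> (real m - real n + 1) / 2 * a" .
          have "real j' * (1-a) \<le> (126 * real n) * (1-a)" using jl nn a by (intro mult_right_mono) auto
          also have "\<dots> \<le> (250 * real n) * (1-a)" using a by (intro mult_right_mono) auto
          also have "\<dots> \<le> (real m - real n + 1) / 2 * a" using F1 by simp
          finally have h2: "real j' * (1-a) \<le> (real m - real n + 1) / 2 * a" .
          have "(real m - real j' + 1) * a = (real m - real n + 1) * a - (real j' - real n) * a"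
            by (simp add: algebra_simps)
          thus "1 * real j' * (1 - a) \<le> (real m - real j' + 1) * a" using h1 h2 by simp
        qed
        thus ?thesis using j by simp
      qed
      have "real (n*n) * bb m a n = (\<Sum>j\<in>{n..<n + n*n}. bb m a n)" by simp
      also have "\<dots> \<le> (\<Sum>j\<in>{n..<n + n*n}. bb m a j)" by (rule sum_mono) (rule grow)
      also have "\<dots> \<le> 1" using a by (intro bb_sum_le1) auto
      finally have "(real n)^2 * bb m a n \<le> 1" by (simp add: power2_eq_square)
      hence "bb m a n \<le> 1 / (real n)^2" using n by (simp add: field_simps)
      moreover have "bb m a n * b^n \<le> bb m a n" using mult_left_mono[OF bn(2) xnn[of n]] by simp
      ultimately show ?thesis using fin by linarith
    qed
  qed
qed


lemma cube_root:
  fixes x :: real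
  assumes "0 < x" shows "(x powr (1/3))^3 = x" "0 < x powr (1/3)"
proof -
  have "(x powr (1/3))^3 = x powr (of_nat 3 * (1/3))" using assms by (intro powr_power) auto
  thus "(x powr (1/3))^3 = x" using assms by simp
  show "0 < x powr (1/3)" using assms by simp
qed

lemma neg13: "(x::real) powr (-1/3) = 1 / x powr (1/3)"
proof -
  have "-1/3 = -(1/3::real)" by simp
  thus ?thesis by (simp only: powr_minus_divide)
qed

lemma neg2: "0 < (x::real) \<Longrightarrow> x powr (-2) = 1 / x^2"
  by (simp add: powr_minus_divide)

lemma Pgap_nonneg: "0 \<le> Pgap m n p q"
  unfolding Pgap_def by simp

lemma left_ineq:
  fixes K :: real
  assumes p: "0 \<le> p" "p \<le> 2/3" and q: "0 \<le> q" "q \<le> 2/3" and m: "1 \<le> m"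
    and K: "40000000000 \<le> K"
  shows "(1 - K * real m powr (-1/3)) * Pgap (m-1) n p q - 2 * real m powr (-2) \<le> Pgap m n p q"
proof -
  obtain N where mN: "m = Suc N" using m by (cases m) auto
  define a where "a = max p q"
  define b where "b = min p q"
  have a: "0 \<le> a" "a \<le> 2/3" and b: "0 \<le> b" "b \<le> 2/3" using p q unfolding a_def b_def by auto
  define v where "v = real m powr (1/3)"
  have v: "v^3 = real N + 1" "0 < v" using cube_root[of "real m"] m mN unfolding v_def by auto
  have p1: "0 \<le> p" "p \<le> 1" "0 \<le> q" "q \<le> 1" using p q by auto
  define P' where "P' = Pgap N n p q"
  have P'eq: "P' = (\<Sum>j\<le>n. bb n b j * (\<Sum>i\<le>j. bb N a i))"
    unfolding P'_def a_def b_def by (rule Pgap_left[OF p1])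
  have Peq: "Pgap m n p q = P' - (\<Sum>j\<le>n. bb n b j * (a * bb N a j))"
  proof -
    have "Pgap m n p q = (\<Sum>j\<le>n. bb n b j * (\<Sum>i\<le>j. bb (Suc N) a i))"
      unfolding mN a_def b_def by (rule Pgap_left[OF p1])
    also have "\<dots> = (\<Sum>j\<le>n. bb n b j * (\<Sum>i\<le>j. bb N a i) - bb n b j * (a * bb N a j))"
      by (intro sum.cong refl) (simp add: F_rec right_diff_distrib)
    also have "\<dots> = P' - (\<Sum>j\<le>n. bb n b j * (a * bb N a j))"
      unfolding P'eq by (simp add: sum_subtractf)
    finally show ?thesis .
  qed
  have yn: "\<And>j. 0 \<le> bb n b j" using b by (simp add: bb_nonneg)
  have "(\<Sum>j\<le>n. bb n b j * (a * bb N a j))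
      \<le> (\<Sum>j\<le>n. bb n b j * (K / v * (\<Sum>i\<le>j. bb N a i) + 1/(real N + 1)^2))"
  proof (rule sum_mono)
    fix j
    show "bb n b j * (a * bb N a j) \<le> bb n b j * (K / v * (\<Sum>i\<le>j. bb N a i) + 1/(real N + 1)^2)"
      using Lstar[OF a v K] yn by (intro mult_left_mono) auto
  qed
  also have "\<dots> = K / v * P' + 1/(real N + 1)^2 * (\<Sum>j\<le>n. bb n b j)"
    unfolding P'eq by (simp add: sum.distrib sum_distrib_left sum_distrib_right sum_divide_distrib algebra_simps)
  also have "\<dots> = K / v * P' + 1/(real m)^2" using bb_sum[of n b] mN by simp
  finally have bound: "(\<Sum>j\<le>n. bb n b j * (a * bb N a j)) \<le> K / v * P' + 1/(real m)^2" .
  have "K * real m powr (-1/3) = K / v" unfolding v_def neg13 by simp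
  moreover have "real m powr (-2) = 1/(real m)^2" using m by (intro neg2) auto
  moreover have "0 \<le> 1/(real m)^2" by simp
  moreover have "Pgap (m-1) n p q = P'" unfolding P'_def mN by simp
  ultimately have e1: "(1 - K * real m powr (-1/3)) * Pgap (m-1) n p q - 2 * real m powr (-2)
      = P' - K / v * P' - 2 / (real m)^2"
    by (simp add: algebra_simps)
  have "0 \<le> 1/(real m)^2" by simp
  thus ?thesis using e1 Peq bound by linarith
qed


lemma right_ineq:
  fixes K :: real
  assumes p: "0 \<le> p" "p \<le> 2/3" and q: "0 \<le> q" "q \<le> 2/3" and n: "1 \<le> n"
    and K: "100000000000000000000000000000000000000000000000000000000 \<le> K"
  shows "Pgap m n p q \<le> (1 + 2 * K * real n powr (-1/3)) * Pgap m (n-1) p q + 2 * real n powr (-2)"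
proof -
  obtain N where nN: "n = Suc N" using n by (cases n) auto
  define a where "a = max p q"
  define b where "b = min p q"
  have a: "0 \<le> a" "a \<le> 2/3" and b: "0 \<le> b" "b \<le> 2/3" using p q unfolding a_def b_def by auto
  define v where "v = real n powr (1/3)"
  have v: "v^3 = real N + 1" "0 < v" using cube_root[of "real n"] n nN unfolding v_def by auto
  have vn: "v^3 = real n" "0 < v" using v nN by auto
  have p1: "0 \<le> p" "p \<le> 1" "0 \<le> q" "q \<le> 1" using p q by auto
  define x where "x = (\<lambda>i. bb m a i)"
  have xnn: "\<And>i. 0 \<le> x i" unfolding x_def using a by (simp add: bb_nonneg)
  define G' where "G' = (\<lambda>i. \<Sum>j\<in>{i..N}. bb N b j)"
  have G'nn: "\<And>i. 0 \<le> G' i" unfolding G'_def using b by (simp add: bb_nonneg sum_nonneg)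
  define P' where "P' = Pgap m N p q"
  have P'eq: "P' = (\<Sum>i\<le>m. x i * G' i)"
    unfolding P'_def x_def G'_def a_def b_def by (rule Pgap_right[OF p1])
  have P'nn: "0 \<le> P'" unfolding P'_def by (rule Pgap_nonneg)
  have Peq: "Pgap m n p q = (\<Sum>i\<le>m. x i * (\<Sum>j\<in>{i..Suc N}. bb (Suc N) b j))"
    unfolding x_def nN a_def b_def by (rule Pgap_right[OF p1])
  define E where "E = (\<lambda>i::nat. if i = n then x n * b^n else 0)"
  have each: "x i * (\<Sum>j\<in>{i..Suc N}. bb (Suc N) b j) \<le> x i * G' i + K / v * (x i * G' i) + x i / (real n)^2 + E i" for i
  proof (cases i)
    case 0
    have "x i * (\<Sum>j\<in>{i..Suc N}. bb (Suc N) b j) = x i * G' i"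
      unfolding G'_def 0 using G_zero[of "Suc N" b] G_zero[of N b] by simp
    moreover have "0 \<le> K / v * (x i * G' i)" using K v xnn G'nn by simp
    moreover have "0 \<le> x i / (real n)^2" using xnn by simp
    moreover have "0 \<le> E i" unfolding E_def using xnn b by simp
    ultimately show ?thesis by linarith
  next
    case (Suc i')
    have grec: "(\<Sum>j\<in>{i..Suc N}. bb (Suc N) b j) = G' i + b * bb N b i'"
      unfolding Suc G'_def by (rule G_rec)
    have o1: "0 \<le> K / v * (x i * G' i)" using K v xnn G'nn by simp
    have o2: "0 \<le> x i / (real n)^2" using xnn by simp
    have o3: "0 \<le> E i" unfolding E_def using xnn b by simp
    have "x i * (b * bb N b i') \<le> K / v * (x i * G' i) + x i / (real n)^2 + E i"
    proof (cases "i' < N")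
      case True
      have "b * bb N b i' \<le> K / v * G' i + 1/(real N + 1)^2"
        using Rstar[OF b v K True] unfolding G'_def Suc by simp
      hence "x i * (b * bb N b i') \<le> x i * (K / v * G' i + 1/(real N + 1)^2)"
        using xnn by (intro mult_left_mono) auto
      also have "\<dots> = K / v * (x i * G' i) + x i / (real n)^2" using nN by (simp add: algebra_simps)
      finally show ?thesis using o3 by linarith
    next
      case False
      show ?thesis
      proof (cases "i' = N")
        case True
        have bN: "bb N b N = b^N" by (simp add: bb_def)
        have "x i * (b * bb N b i') = x n * b^n" unfolding True nN Suc bN by simp
        moreover have "E i = x n * b^n" unfolding E_def Suc True nN by simp
        ultimately show ?thesis using o1 o2 by linarith
      next
        case False
        hence "bb N b i' = 0" using \<open>\<not> i' < N\<close> by (simp add: bb_zero)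
        thus ?thesis using o1 o2 o3 by simp
      qed
    qed
    thus ?thesis unfolding grec by (simp add: algebra_simps)
  qed
  have "Pgap m n p q \<le> (\<Sum>i\<le>m. x i * G' i + K / v * (x i * G' i) + x i / (real n)^2 + E i)"
    unfolding Peq by (rule sum_mono) (rule each)
  also have "\<dots> = P' + K / v * P' + (\<Sum>i\<le>m. x i) / (real n)^2 + (\<Sum>i\<le>m. E i)"
    unfolding P'eq by (simp add: sum.distrib sum_distrib_left sum_divide_distrib)
  also have "(\<Sum>i\<le>m. x i) = 1" unfolding x_def by (rule bb_sum)
  also have "(\<Sum>i\<le>m. E i) \<le> x n * b^n"
  proof -
    have "(\<Sum>i\<le>m. E i) = (if n \<in> {..m} then x n * b^n else 0)"
      unfolding E_def by (rule sum.delta) simp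
    thus ?thesis using xnn[of n] b by simp
  qed
  also have "x n * b^n \<le> K / v * P' + 1/(real n)^2"
  proof -
    have bt: "x n * b^n \<le> K / v * (x (n-1) * b^(n-1)) + 1/(real n)^2"
      unfolding x_def using badterm[OF a b n vn] K by simp
    have "x (n-1) * b^(n-1) \<le> P'"
    proof (cases "N \<le> m")
      case True
      have "x N * G' N \<le> (\<Sum>i\<le>m. x i * G' i)"
        using True xnn G'nn by (intro member_le_sum) auto
      moreover have "G' N = b^N" unfolding G'_def by (simp add: bb_def)
      ultimately show ?thesis using P'eq nN by simp
    next
      case False
      hence "x (n-1) = 0" unfolding x_def nN by (simp add: bb_zero)
      thus ?thesis using P'nn by simp
    qed
    hence "K / v * (x (n-1) * b^(n-1)) \<le> K / v * P'" using K v by (intro mult_left_mono) auto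
    thus ?thesis using bt by linarith
  qed
  finally have main: "Pgap m n p q \<le> P' + K / v * P' + 1 / (real n)^2 + (K / v * P' + 1/(real n)^2)"
    by simp
  have "2 * K * real n powr (-1/3) = 2 * K / v" unfolding v_def neg13 by simp
  moreover have "real n powr (-2) = 1/(real n)^2" using n by (intro neg2) auto
  moreover have "Pgap m (n-1) p q = P'" unfolding P'_def nN by simp
  ultimately have e1: "(1 + 2 * K * real n powr (-1/3)) * Pgap m (n-1) p q + 2 * real n powr (-2)
      = P' + 2 * (K / v * P') + 2 / (real n)^2"
    by (simp add: algebra_simps)
  show ?thesis using main e1 by linarith
qed


theorem lemma3p3:
  "\<exists>C::real. C > 0 \<and>
     (\<forall>(m::nat) (n::nat) (p::real) (q::real).
        m \<ge> 1 \<longrightarrow> n \<ge> 1 \<longrightarrow> p \<in> {0..2/3} \<longrightarrow> q \<in> {0..2/3} \<longrightarrow>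
        (1 - C * real m powr (-1/3)) * Pgap (m - 1) n p q - 2 * real m powr (-2)
          \<le> Pgap m n p q
        \<and> Pgap m n p q
          \<le> (1 + C * real n powr (-1/3)) * Pgap m (n - 1) p q + 2 * real n powr (-2))"
proof (intro exI[of _ "2 * (100000000000000000000000000000000000000000000000000000000::real)"] conjI allI impI)
  show "0 < 2 * (100000000000000000000000000000000000000000000000000000000::real)" by simp
next
  fix m n :: nat and p q :: real
  assume m: "m \<ge> 1" and n: "n \<ge> 1" and p: "p \<in> {0..2/3}" and q: "q \<in> {0..2/3}"
  have p': "0 \<le> p" "p \<le> 2/3" and q': "0 \<le> q" "q \<le> 2/3" using p q by auto
  show "(1 - 2 * (100000000000000000000000000000000000000000000000000000000::real) * real m powr (-1/3)) * Pgap (m - 1) n p q - 2 * real m powr (-2) \<le> Pgap m n p q"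
    by (rule left_ineq[OF p' q' m]) simp
  show "Pgap m n p q \<le> (1 + 2 * (100000000000000000000000000000000000000000000000000000000::real) * real n powr (-1/3)) * Pgap m (n - 1) p q + 2 * real n powr (-2)"
    by (rule right_ineq[OF p' q' n]) simp
qed

end
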